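(* Let $d\ge1$, let $i\in[n]$, and let $v_i:\mathbb{R}_{\ge0}^n\to\mathbb{R}_{\ge0}$ be a $d$-SOS function. Let $A$ be a uniformly random subset of $[n]\setminus\{i\}$ (each of the $2^{n-1}$ subsets equally likely) and $B=([n]\setminus\{i\})\setminus A$. Then for every $\mathbf{s}\in\mathbb{R}_{\ge0}^n$, $$\mathbb{E}_A\big[v_i(\mathbf{s}_A,\mathbf{0}_B,s_i)\big]\ge\frac{1}{d+1}\,v_i(\mathbf{s}),$$ where $(\mathbf{s}_A,\mathbf{0}_B,s_i)$ is the vector agreeing with $\mathbf{s}$ on $A\cup\{i\}$ and equal to $0$ on $B$.
   Context: A function $v:\mathbb{R}_{\ge0}^n\to\mathbb{R}_{\ge0}$ is $d$-SOS if for every coordinate $j$, every $s_j\ge0$, every $\delta\ge0$, and every $\mathbf{s}_{-j},\mathbf{s}'_{-j}$ with $\mathbf{s}'_{-j}\le\mathbf{s}_{-j}$ coordinate-wise, $d\cdot\big(v(\mathbf{s}'_{-j},s_j+\delta)-v(\mathbf{s}'_{-j},s_j)\big)\ge v(\mathbf{s}_{-j},s_j+\delta)-v(\mathbf{s}_{-j},s_j)$. SOS means $1$-SOS. *)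

theory Defs
  imports "HOL-Analysis.Analysis"
begin

text \<open>Vectors in R_{\<ge>0}^n are represented as functions nat \<Rightarrow> real that are
  nonnegative on coordinates {..<n} and zero outside (canonical representation).\<close>

definition nnvec :: "nat \<Rightarrow> (nat \<Rightarrow> real) set" where
  "nnvec n = {s. (\<forall>j<n. 0 \<le> s j) \<and> (\<forall>j\<ge>n. s j = 0)}"

definition dSOS :: "nat \<Rightarrow> real \<Rightarrow> ((nat \<Rightarrow> real) \<Rightarrow> real) \<Rightarrow> bool" where
  "dSOS n d v \<longleftrightarrow>
     (\<forall>s\<in>nnvec n. 0 \<le> v s) \<and>
     (\<forall>j<n. \<forall>s\<in>nnvec n. \<forall>s'\<in>nnvec n. \<forall>x \<ge> 0. \<forall>\<delta> \<ge> 0.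
        (\<forall>k<n. k \<noteq> j \<longrightarrow> s' k \<le> s k) \<longrightarrow>
        d * (v (s'(j := x + \<delta>)) - v (s'(j := x))) \<ge> v (s(j := x + \<delta>)) - v (s(j := x)))"

definition restrict_vec :: "(nat \<Rightarrow> real) \<Rightarrow> nat set \<Rightarrow> nat \<Rightarrow> nat \<Rightarrow> real" where
  "restrict_vec s A i = (\<lambda>j. if j \<in> A \<or> j = i then s j else 0)"

end

theory Submission
  imports Defs
begin

definition rv :: "(nat \<Rightarrow> real) \<Rightarrow> nat set \<Rightarrow> nat \<Rightarrow> real" where
  "rv s S = (\<lambda>j. if j \<in> S then s j else 0)"

lemma rv_nn: "s \<in> nnvec n \<Longrightarrow> S \<subseteq> {..<n} \<Longrightarrow> rv s S \<in> nnvec n"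
  unfolding nnvec_def rv_def by auto

lemma key:
  assumes d: "dSOS n d v" and s: "s \<in> nnvec n"
  shows "finite B \<Longrightarrow> B \<subseteq> {..<n} \<Longrightarrow> P \<subseteq> {..<n} \<Longrightarrow> B \<inter> P = {} \<Longrightarrow> Q \<subseteq> P \<Longrightarrow>
    v (rv s (P \<union> B)) - v (rv s P) \<le> d * (v (rv s (Q \<union> B)) - v (rv s Q))"
proof (induction B rule: finite_induct)
  case empty
  then show ?case by simp
next
  case (insert b B)
  have bn: "b < n" using insert by auto
  have bP: "b \<notin> P \<union> B" "b \<notin> Q \<union> B" using insert by auto
  have IH: "v (rv s (P \<union> B)) - v (rv s P) \<le> d * (v (rv s (Q \<union> B)) - v (rv s Q))"
    using insert by auto
  have m1: "rv s (P \<union> B) \<in> nnvec n" "rv s (Q \<union> B) \<in> nnvec n"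
    using insert by (auto intro!: rv_nn[OF s])
  have sb: "0 \<le> s b" using s bn unfolding nnvec_def by auto
  have le: "\<forall>k<n. k \<noteq> b \<longrightarrow> rv s (Q \<union> B) k \<le> rv s (P \<union> B) k"
    using s insert(7) unfolding rv_def nnvec_def by auto
  have st: "d * (v ((rv s (Q \<union> B))(b := 0 + s b)) - v ((rv s (Q \<union> B))(b := 0)))
      \<ge> v ((rv s (P \<union> B))(b := 0 + s b)) - v ((rv s (P \<union> B))(b := 0))"
    using d bn m1 sb le unfolding dSOS_def by blast
  have e1: "(rv s (Q \<union> B))(b := 0 + s b) = rv s (Q \<union> insert b B)"
    "(rv s (P \<union> B))(b := 0 + s b) = rv s (P \<union> insert b B)"
    unfolding rv_def by auto
  have e2: "(rv s (Q \<union> B))(b := 0) = rv s (Q \<union> B)"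
    "(rv s (P \<union> B))(b := 0) = rv s (P \<union> B)"
    using bP unfolding rv_def by auto
  from st IH show ?case unfolding e1 e2 by (simp add: algebra_simps)
qed

lemma one_side:
  assumes d1: "d \<ge> 1" and i: "i < n" and d: "dSOS n d v" and s: "s \<in> nnvec n"
    and A: "A \<subseteq> {..<n} - {i}"
  shows "v s \<le> v (rv s (A \<union> {i})) + d * v (rv s (({..<n} - {i} - A) \<union> {i}))"
proof -
  let ?B = "{..<n} - {i} - A"
  have k: "v (rv s ((A \<union> {i}) \<union> ?B)) - v (rv s (A \<union> {i}))
      \<le> d * (v (rv s ({i} \<union> ?B)) - v (rv s {i}))"
    by (rule key[OF d s]) (use A i in auto)
  have "(A \<union> {i}) \<union> ?B = {..<n}" using A i by auto
  moreover have "rv s {..<n} = s" using s unfolding rv_def nnvec_def by (auto simp: fun_eq_iff)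
  moreover have "v (rv s {i}) \<ge> 0" using d rv_nn[OF s, of "{i}"] i unfolding dSOS_def by auto
  moreover have "{i} \<union> ?B = ?B \<union> {i}" by auto
  ultimately show ?thesis using k d1
    by (smt (verit, ccfv_SIG) mult_left_mono)
qed

theorem mainTheorem2:
  fixes n i :: nat and d :: real and v :: "(nat \<Rightarrow> real) \<Rightarrow> real" and s :: "nat \<Rightarrow> real"
  assumes "d \<ge> 1" and "i < n" and "dSOS n d v" and "s \<in> nnvec n"
  shows "(\<Sum>A\<in>Pow ({..<n} - {i}). v (restrict_vec s A i)) / 2 ^ (n - 1)
           \<ge> v s / (d + 1)"
proof -
  let ?U = "{..<n} - {i}"
  define f where "f A = v (rv s (A \<union> {i}))" for A
  have rr: "restrict_vec s A i = rv s (A \<union> {i})" for A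
    unfolding restrict_vec_def rv_def by auto
  have fin: "finite (Pow ?U)" by simp
  have cardU: "card ?U = n - 1" using assms(2) by simp
  have cP: "card (Pow ?U) = 2 ^ (n - 1)" using cardU by (simp add: card_Pow)
  have bij: "bij_betw (\<lambda>A. ?U - A) (Pow ?U) (Pow ?U)"
    by (rule bij_betwI[where g="\<lambda>A. ?U - A"]) auto
  have swap: "(\<Sum>A\<in>Pow ?U. f (?U - A)) = (\<Sum>A\<in>Pow ?U. f A)"
    using sum.reindex_bij_betw[OF bij, of f] by simp
  have each: "2 * v s \<le> (d + 1) * (f A + f (?U - A))" if "A \<in> Pow ?U" for A
  proof -
    have h1: "v s \<le> f A + d * f (?U - A)"
      using one_side[OF assms, of A] that unfolding f_def by auto
    have "?U - (?U - A) = A" using that by auto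
    then have h2: "v s \<le> f (?U - A) + d * f A"
      using one_side[OF assms, of "?U - A"] unfolding f_def by auto
    show ?thesis using h1 h2 by (simp add: algebra_simps)
  qed
  have "(\<Sum>A\<in>Pow ?U. 2 * v s) \<le> (\<Sum>A\<in>Pow ?U. (d + 1) * (f A + f (?U - A)))"
    by (rule sum_mono) (use each in auto)
  also have "\<dots> = (d + 1) * (2 * (\<Sum>A\<in>Pow ?U. f A))"
    by (simp add: sum_distrib_left[symmetric] sum.distrib swap)
  finally have "2 ^ (n - 1) * (2 * v s) \<le> (d + 1) * (2 * (\<Sum>A\<in>Pow ?U. f A))"
    using cP by simp
  then have "2 ^ (n - 1) * v s \<le> (d + 1) * (\<Sum>A\<in>Pow ?U. f A)" by simp
  moreover have "d + 1 > 0" using assms(1) by simp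
  ultimately show ?thesis unfolding rr f_def[symmetric]
    by (simp add: divide_simps mult.commute)
qed

end
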